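(* Let $(\Omega_t)_{t\in(0,T)}$ be a family of open subsets of $\mathbb{R}^{n+1}$, $\bar\Omega_t=\phi_t(\bar\Omega)$ for a smooth family of diffeomorphisms $\phi_t$, evolving by $\frac{\partial x}{\partial t}=-\nabla f(x,t)$ for $x=\phi_t(q)\in\Omega_t$, where the smooth functions $f(t)$ satisfy \[ \frac{\partial f}{\partial t}+\Delta f=|\nabla f|^2+\frac{n+1}{2\tau}\quad\text{in }\Omega_t, \] and $\tau(t)>0$ satisfies $\frac{d\tau}{dt}=-1$, for $t\in(0,T)$. Then $W=\tau(2\Delta f-|\nabla f|^2)+f-(n+1)$ satisfies \[ \Big(\frac{d}{dt}+\Delta\Big)W=2\tau\Big|\nabla_i\nabla_j f-\frac{\delta_{ij}}{2\tau}\Big|^2+\nabla W\cdot\nabla f\quad\text{in }\Omega_t. \]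
   Context: For a function $F(x,t)$ on the moving domains, $\frac{dF}{dt}$ denotes the total time derivative along the trajectories of the flow, i.e. $\frac{dF}{dt}(\phi_t(q),t)=\frac{\partial}{\partial t}\big[F(\phi_t(q),t)\big]$; thus $\frac{dF}{dt}=\frac{\partial F}{\partial t}-\nabla F\cdot\nabla f$. All gradients, Laplacians and Hessians are Euclidean. *)

theory Defs
  imports "HOL-Analysis.Analysis"
begin

definition dirderiv :: "'b::real_normed_vector \<Rightarrow> ('b \<Rightarrow> 'c::real_normed_vector) \<Rightarrow> 'b \<Rightarrow> 'c" where
  "dirderiv v g x = frechet_derivative g (at x) v"

fun iter_dirderiv :: "'b::real_normed_vector list \<Rightarrow> ('b \<Rightarrow> 'c::real_normed_vector) \<Rightarrow> 'b \<Rightarrow> 'c" where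
  "iter_dirderiv [] g = g"
| "iter_dirderiv (v # vs) g = dirderiv v (iter_dirderiv vs g)"

text \<open>C-infinity on an open set U: every iterated directional derivative is
  (Frechet) differentiable on U (hence all derivatives exist and are continuous).\<close>
definition smooth_on :: "'b::real_normed_vector set \<Rightarrow> ('b \<Rightarrow> 'c::real_normed_vector) \<Rightarrow> bool" where
  "smooth_on U g \<longleftrightarrow> open U \<and> (\<forall>vs. iter_dirderiv vs g differentiable_on U)"

definition grad :: "('a::euclidean_space \<Rightarrow> real) \<Rightarrow> 'a \<Rightarrow> 'a" where
  "grad g x = (\<Sum>b\<in>Basis. dirderiv b g x *\<^sub>R b)"

definition hess :: "('a::euclidean_space \<Rightarrow> real) \<Rightarrow> 'a \<Rightarrow> 'a \<Rightarrow> 'a \<Rightarrow> real" where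
  "hess g x i j = dirderiv i (dirderiv j g) x"

definition lap :: "('a::euclidean_space \<Rightarrow> real) \<Rightarrow> 'a \<Rightarrow> real" where
  "lap g x = (\<Sum>b\<in>Basis. hess g x b b)"

definition smooth_diffeo_family ::
  "('a::euclidean_space \<Rightarrow> real \<Rightarrow> 'a) \<Rightarrow> 'a set \<Rightarrow> (real \<Rightarrow> 'a set) \<Rightarrow> real \<Rightarrow> bool" where
  "smooth_diffeo_family \<phi> \<Omega>0 \<Omega> T \<longleftrightarrow>
     (\<exists>U. closure \<Omega>0 \<times> {0<..<T} \<subseteq> U \<and> smooth_on U (\<lambda>(q,t). \<phi> q t)) \<and>
     (\<forall>t\<in>{0<..<T}.
        inj_on (\<lambda>q. \<phi> q t) (closure \<Omega>0) \<and>
        (\<lambda>q. \<phi> q t) ` closure \<Omega>0 = closure (\<Omega> t) \<and>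
        (\<lambda>q. \<phi> q t) ` \<Omega>0 = \<Omega> t \<and>
        (\<exists>\<psi> V. closure (\<Omega> t) \<subseteq> V \<and> smooth_on V \<psi> \<and>
               (\<forall>q\<in>closure \<Omega>0. \<psi> (\<phi> q t) = q)))"

text \<open>The quantity W = tau (2 Lap f - |grad f|^2) + f - (n+1), with n+1 = DIM('a).\<close>
definition Wfun :: "(real \<Rightarrow> real) \<Rightarrow> ('a::euclidean_space \<Rightarrow> real \<Rightarrow> real) \<Rightarrow> 'a \<Rightarrow> real \<Rightarrow> real" where
  "Wfun \<tau> f x t = \<tau> t * (2 * lap (\<lambda>y. f y t) x - (norm (grad (\<lambda>y. f y t) x))\<^sup>2)
                   + f x t - real DIM('a)"

end

theory Submission
  imports Defs
begin


lemma dd_works: "g differentiable (at x) \<Longrightarrow> (g has_derivative (\<lambda>v. dirderiv v g x)) (at x)"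
  unfolding dirderiv_def using frechet_derivative_works by blast

lemma dd_eq: "(g has_derivative g') (at x) \<Longrightarrow> dirderiv v g x = g' v"
  unfolding dirderiv_def using frechet_derivative_at by metis

lemma dd_linear: "g differentiable (at x) \<Longrightarrow> linear (\<lambda>v. dirderiv v g x)"
  using dd_works has_derivative_linear by blast

lemma dd_local:
  assumes "open S" "x \<in> S" "\<forall>y\<in>S. g1 y = g2 y"
  shows "dirderiv v g1 x = dirderiv v g2 x"
proof -
  have "\<And>f'. (g1 has_derivative f') (at x) \<longleftrightarrow> (g2 has_derivative f') (at x)"
    using assms has_derivative_transform_within_open by (metis (no_types, lifting))
  then show ?thesis unfolding dirderiv_def frechet_derivative_def by simp
qed

lemma iter_snoc: "iter_dirderiv vs (dirderiv v g) = iter_dirderiv (vs @ [v]) g"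
  by (induction vs) auto

lemma smooth_dd: "smooth_on U g \<Longrightarrow> smooth_on U (dirderiv v g)"
  unfolding smooth_on_def by (metis iter_snoc)

lemma smooth_diff: "smooth_on U g \<Longrightarrow> x \<in> U \<Longrightarrow> g differentiable (at x)"
  unfolding smooth_on_def using differentiable_on_eq_differentiable_at
  by (metis iter_dirderiv.simps(1))

lemma smooth_subset: "smooth_on U g \<Longrightarrow> open V \<Longrightarrow> V \<subseteq> U \<Longrightarrow> smooth_on V g"
  unfolding smooth_on_def using differentiable_on_subset by blast

lemma dd_line:
  fixes h :: "'v::real_normed_vector \<Rightarrow> real"
  assumes "h differentiable (at (a + s *\<^sub>R w))"
  shows "((\<lambda>s. h (a + s *\<^sub>R w)) has_real_derivative dirderiv w h (a + s *\<^sub>R w)) (at s)"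
proof -
  have 1: "((\<lambda>s. a + s *\<^sub>R w) has_derivative (\<lambda>r. r *\<^sub>R w)) (at s)"
    by (auto intro!: derivative_eq_intros)
  have 2: "((\<lambda>s. h (a + s *\<^sub>R w)) has_derivative (\<lambda>r. dirderiv (r *\<^sub>R w) h (a + s *\<^sub>R w))) (at s)"
    using has_derivative_compose[OF 1 dd_works[OF assms]] by simp
  have "(\<lambda>r. dirderiv (r *\<^sub>R w) h (a + s *\<^sub>R w)) = (*) (dirderiv w h (a + s *\<^sub>R w))"
    using linear_cmul[OF dd_linear[OF assms]] by (auto simp: mult.commute)
  then show ?thesis using 2 by (simp add: has_field_derivative_def)
qed

lemma mvt2d:
  fixes g :: "'v::real_normed_vector \<Rightarrow> real"
  assumes sm: "smooth_on S g" and d: "d > 0"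
    and inS: "\<And>s r. 0 \<le> s \<Longrightarrow> s \<le> d \<Longrightarrow> 0 \<le> r \<Longrightarrow> r \<le> d \<Longrightarrow> x + s *\<^sub>R u + r *\<^sub>R v \<in> S"
  shows "\<exists>\<sigma> \<rho>. 0 < \<sigma> \<and> \<sigma> < d \<and> 0 < \<rho> \<and> \<rho> < d \<and>
     g (x + d *\<^sub>R u + d *\<^sub>R v) - g (x + d *\<^sub>R u) - g (x + d *\<^sub>R v) + g x
       = d * d * dirderiv v (dirderiv u g) (x + \<sigma> *\<^sub>R u + \<rho> *\<^sub>R v)"
proof -
  define k where "k s = g ((x + d *\<^sub>R v) + s *\<^sub>R u) - g (x + s *\<^sub>R u)" for s
  have D1: "DERIV k s :> (dirderiv u g ((x + d *\<^sub>R v) + s *\<^sub>R u) - dirderiv u g (x + s *\<^sub>R u))"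
    if s0: "0 \<le> s" "s \<le> d" for s
  proof -
    have s: "0 \<le> s \<and> s \<le> d" using s0 by simp
    have a: "g differentiable (at ((x + d *\<^sub>R v) + s *\<^sub>R u))"
      using smooth_diff[OF sm] inS[of s d] s d by (simp add: algebra_simps)
    have b: "g differentiable (at (x + s *\<^sub>R u))"
      using smooth_diff[OF sm] inS[of s 0] s d by (simp add: algebra_simps)
    show "DERIV k s :> (dirderiv u g ((x + d *\<^sub>R v) + s *\<^sub>R u) - dirderiv u g (x + s *\<^sub>R u))"
      unfolding k_def by (intro DERIV_diff dd_line a b)
  qed
  from MVT2[OF d D1] obtain \<sigma> where \<sigma>: "0 < \<sigma>" "\<sigma> < d"
    "k d - k 0 = (d - 0) * (dirderiv u g ((x + d *\<^sub>R v) + \<sigma> *\<^sub>R u) - dirderiv u g (x + \<sigma> *\<^sub>R u))"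
    by auto
  define m where "m r = dirderiv u g ((x + \<sigma> *\<^sub>R u) + r *\<^sub>R v)" for r
  have D2: "DERIV m r :> dirderiv v (dirderiv u g) ((x + \<sigma> *\<^sub>R u) + r *\<^sub>R v)"
    if r0: "0 \<le> r" "r \<le> d" for r
  proof -
    have r: "0 \<le> r \<and> r \<le> d" using r0 by simp
    have a: "dirderiv u g differentiable (at ((x + \<sigma> *\<^sub>R u) + r *\<^sub>R v))"
      using smooth_diff[OF smooth_dd[OF sm]] inS[of \<sigma> r] r \<sigma> by (simp add: algebra_simps)
    show "DERIV m r :> dirderiv v (dirderiv u g) ((x + \<sigma> *\<^sub>R u) + r *\<^sub>R v)"
      unfolding m_def by (intro dd_line a)
  qed
  from MVT2[OF d D2] obtain \<rho> where \<rho>: "0 < \<rho>" "\<rho> < d"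
    "m d - m 0 = (d - 0) * dirderiv v (dirderiv u g) ((x + \<sigma> *\<^sub>R u) + \<rho> *\<^sub>R v)"
    by auto
  have "g (x + d *\<^sub>R u + d *\<^sub>R v) - g (x + d *\<^sub>R u) - g (x + d *\<^sub>R v) + g x = k d - k 0"
    unfolding k_def by (simp add: algebra_simps)
  also have "\<dots> = d * (m d - m 0)"
    using \<sigma>(3) unfolding m_def by (simp add: algebra_simps)
  also have "\<dots> = d * d * dirderiv v (dirderiv u g) (x + \<sigma> *\<^sub>R u + \<rho> *\<^sub>R v)"
    using \<rho>(3) by simp
  finally show ?thesis using \<sigma> \<rho> by blast
qed

lemma sym2:
  fixes g :: "'v::real_normed_vector \<Rightarrow> real"
  assumes sm: "smooth_on S g" and x: "x \<in> S"
  shows "dirderiv v (dirderiv u g) x = dirderiv u (dirderiv v g) x"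
proof (rule ccontr)
  let ?A = "dirderiv v (dirderiv u g)" and ?B = "dirderiv u (dirderiv v g)"
  assume ne: "?A x \<noteq> ?B x"
  define \<epsilon> where "\<epsilon> = \<bar>?A x - ?B x\<bar> / 2"
  have \<epsilon>: "\<epsilon> > 0" using ne by (simp add: \<epsilon>_def)
  have "open S" using sm by (simp add: smooth_on_def)
  then obtain e where e: "e > 0" "ball x e \<subseteq> S" using x open_contains_ball by blast
  have cA: "continuous (at x) ?A"
    by (rule differentiable_imp_continuous_within, rule smooth_diff[OF smooth_dd[OF smooth_dd[OF sm]] x])
  have cB: "continuous (at x) ?B"
    by (rule differentiable_imp_continuous_within, rule smooth_diff[OF smooth_dd[OF smooth_dd[OF sm]] x])
  obtain d1 where d1: "d1 > 0" "\<And>y. dist y x < d1 \<Longrightarrow> dist (?A y) (?A x) < \<epsilon>"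
    using cA \<epsilon> unfolding continuous_at_eps_delta by blast
  obtain d2 where d2: "d2 > 0" "\<And>y. dist y x < d2 \<Longrightarrow> dist (?B y) (?B x) < \<epsilon>"
    using cB \<epsilon> unfolding continuous_at_eps_delta by blast
  define M where "M = norm u + norm v + 1"
  have M: "M > 0" by (simp add: M_def add_nonneg_pos)
  define d where "d = min e (min d1 d2) / (2 * M)"
  have d: "d > 0" using e d1 d2 M by (simp add: d_def)
  have near: "dist (x + s *\<^sub>R u + r *\<^sub>R v) x < min e (min d1 d2)"
    if "0 \<le> s" "s \<le> d" "0 \<le> r" "r \<le> d" for s r
  proof -
    have "dist (x + s *\<^sub>R u + r *\<^sub>R v) x = norm (s *\<^sub>R u + r *\<^sub>R v)"
      by (simp add: dist_norm)
    also have "\<dots> \<le> s * norm u + r * norm v"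
      using that by (metis (no_types, lifting) abs_of_nonneg norm_scaleR norm_triangle_ineq)
    also have "\<dots> \<le> d * norm u + d * norm v"
      using that by (intro add_mono mult_right_mono) auto
    also have "\<dots> < d * M" using d by (simp add: M_def algebra_simps)
    also have "\<dots> = min e (min d1 d2) / 2" using M by (simp add: d_def)
    also have "\<dots> < min e (min d1 d2)" using e d1 d2 by (simp add: min_def)
    finally show ?thesis .
  qed
  have inS1: "x + s *\<^sub>R u + r *\<^sub>R v \<in> S" if "0 \<le> s" "s \<le> d" "0 \<le> r" "r \<le> d" for s r
    using near[OF that] e by (auto simp: dist_commute)
  have inS2: "x + s *\<^sub>R v + r *\<^sub>R u \<in> S" if "0 \<le> s" "s \<le> d" "0 \<le> r" "r \<le> d" for s r
    using inS1[of r s] that by (simp add: algebra_simps)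
  obtain s1 r1 where 1: "0 < s1" "s1 < d" "0 < r1" "r1 < d"
     "g (x + d *\<^sub>R u + d *\<^sub>R v) - g (x + d *\<^sub>R u) - g (x + d *\<^sub>R v) + g x
       = d * d * ?A (x + s1 *\<^sub>R u + r1 *\<^sub>R v)"
    using mvt2d[OF sm d inS1] by blast
  obtain s2 r2 where 2: "0 < s2" "s2 < d" "0 < r2" "r2 < d"
     "g (x + d *\<^sub>R v + d *\<^sub>R u) - g (x + d *\<^sub>R v) - g (x + d *\<^sub>R u) + g x
       = d * d * ?B (x + s2 *\<^sub>R v + r2 *\<^sub>R u)"
    using mvt2d[OF sm d inS2] by blast
  have "d * d * ?A (x + s1 *\<^sub>R u + r1 *\<^sub>R v) = d * d * ?B (x + s2 *\<^sub>R v + r2 *\<^sub>R u)"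
    using 1(5) 2(5) by (simp add: algebra_simps)
  then have eq: "?A (x + s1 *\<^sub>R u + r1 *\<^sub>R v) = ?B (x + r2 *\<^sub>R u + s2 *\<^sub>R v)"
    using d by (simp add: algebra_simps)
  have a: "dist (?A (x + s1 *\<^sub>R u + r1 *\<^sub>R v)) (?A x) < \<epsilon>"
    using d1(2) near[of s1 r1] 1 by simp
  have b: "dist (?B (x + r2 *\<^sub>R u + s2 *\<^sub>R v)) (?B x) < \<epsilon>"
    using d2(2) near[of r2 s2] 2 by simp
  have "\<bar>?A x - ?B x\<bar> < 2 * \<epsilon>" using a b eq by (simp add: dist_real_def)
  then show False by (simp add: \<epsilon>_def)
qed

lemma sym3:
  fixes g :: "'v::real_normed_vector \<Rightarrow> real"
  assumes sm: "smooth_on S g" and x: "x \<in> S"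
  shows "dirderiv c (dirderiv c (dirderiv b g)) x = dirderiv b (dirderiv c (dirderiv c g)) x"
proof -
  have "open S" using sm by (simp add: smooth_on_def)
  have "dirderiv c (dirderiv c (dirderiv b g)) x = dirderiv c (dirderiv b (dirderiv c g)) x"
    by (rule dd_local[OF \<open>open S\<close> x]) (auto intro: sym2[OF sm])
  also have "\<dots> = dirderiv b (dirderiv c (dirderiv c g)) x"
    by (rule sym2[OF smooth_dd[OF sm] x])
  finally show ?thesis .
qed

lemma slice1:
  fixes F :: "'a::real_normed_vector \<times> real \<Rightarrow> real"
  assumes "F differentiable (at (y, s))"
  shows "dirderiv b (\<lambda>y. F (y, s)) y = dirderiv (b, 0) F (y, s)"
proof -
  have 1: "((\<lambda>y. (y, s)) has_derivative (\<lambda>h. (h, 0))) (at y)"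
    by (auto intro!: derivative_eq_intros)
  show ?thesis
    using has_derivative_compose[OF 1 dd_works[OF assms]] by (rule dd_eq)
qed

lemma open_slice: "open U \<Longrightarrow> open {y. (y, s) \<in> U}"
proof -
  assume "open U"
  have "{y. (y, s) \<in> U} = (\<lambda>y. (y, s)) -` U" by auto
  moreover have "continuous_on UNIV (\<lambda>y::'a::topological_space. (y, s))"
    by (intro continuous_intros)
  ultimately show ?thesis using \<open>open U\<close> open_vimage by metis
qed

lemma slice_iter:
  fixes F :: "'a::real_normed_vector \<times> real \<Rightarrow> real"
  assumes sm: "smooth_on U F"
  shows "(y, s) \<in> U \<Longrightarrow> iter_dirderiv vs (\<lambda>y. F (y, s)) y = iter_dirderiv (map (\<lambda>b. (b, 0)) vs) F (y, s)"
proof (induction vs arbitrary: y)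
  case Nil
  then show ?case by simp
next
  case (Cons v vs)
  have o: "open {y. (y, s) \<in> U}" using sm open_slice by (auto simp: smooth_on_def)
  have "iter_dirderiv (v # vs) (\<lambda>y. F (y, s)) y = dirderiv v (\<lambda>y. iter_dirderiv (map (\<lambda>b. (b, 0)) vs) F (y, s)) y"
    using Cons by (simp, intro dd_local[OF o]) auto
  also have "\<dots> = dirderiv (v, 0) (iter_dirderiv (map (\<lambda>b. (b, 0)) vs) F) (y, s)"
    apply (rule slice1)
    using sm Cons(2) unfolding smooth_on_def
    by (metis differentiable_on_eq_differentiable_at)
  finally show ?case by simp
qed

lemma slice_smooth:
  fixes F :: "'a::real_normed_vector \<times> real \<Rightarrow> real"
  assumes sm: "smooth_on U F"
  shows "smooth_on {y. (y, s) \<in> U} (\<lambda>y. F (y, s))"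
proof -
  have o: "open {y. (y, s) \<in> U}" using sm open_slice by (auto simp: smooth_on_def)
  have "iter_dirderiv vs (\<lambda>y. F (y, s)) differentiable (at y)" if y: "(y, s) \<in> U" for vs y
  proof -
    have 1: "((\<lambda>y. (y, s)) has_derivative (\<lambda>h. (h, 0))) (at y)"
      by (auto intro!: derivative_eq_intros)
    have "iter_dirderiv (map (\<lambda>b. (b, 0)) vs) F differentiable (at (y, s))"
      using sm y unfolding smooth_on_def by (metis differentiable_on_eq_differentiable_at)
    then obtain D where "(iter_dirderiv (map (\<lambda>b. (b, 0)) vs) F has_derivative D) (at (y, s))"
      by (auto simp: differentiable_def)
    from has_derivative_compose[OF 1 this]
    have "((\<lambda>y. iter_dirderiv (map (\<lambda>b. (b, 0)) vs) F (y, s)) has_derivative (\<lambda>h. D (h, 0))) (at y)" .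
    then have "(iter_dirderiv vs (\<lambda>y. F (y, s)) has_derivative (\<lambda>h. D (h, 0))) (at y)"
      by (rule has_derivative_transform_within_open[OF _ o]) (use y slice_iter[OF sm] in auto)
    then show ?thesis by (auto simp: differentiable_def)
  qed
  then show ?thesis using o unfolding smooth_on_def
    by (simp add: differentiable_on_eq_differentiable_at)
qed



lemma hd1:
  fixes A B :: "'b \<Rightarrow> 'v::real_normed_vector \<Rightarrow> real"
  assumes "finite I" "\<And>c. c \<in> I \<Longrightarrow> A c differentiable (at y)" "\<And>c. c \<in> I \<Longrightarrow> B c differentiable (at y)"
  shows "((\<lambda>z. - (\<Sum>c\<in>I. A c z) + (\<Sum>c\<in>I. (B c z)\<^sup>2) + K) has_derivative
     (\<lambda>w. - (\<Sum>c\<in>I. dirderiv w (A c) y) + (\<Sum>c\<in>I. 2 * B c y * dirderiv w (B c) y))) (at y)"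
  using assms
  by (auto intro!: derivative_eq_intros dd_works simp: power2_eq_square algebra_simps sum.distrib)

lemma hd2:
  fixes A B :: "'b \<Rightarrow> 'v::real_normed_vector \<Rightarrow> real"
  assumes "finite I" "\<And>c. c \<in> I \<Longrightarrow> A c differentiable (at y)" "\<And>c. c \<in> I \<Longrightarrow> B c differentiable (at y)"
    "g differentiable (at y)"
  shows "((\<lambda>z. t * (2 * (\<Sum>c\<in>I. A c z) - (\<Sum>c\<in>I. (B c z)\<^sup>2)) + g z - K) has_derivative
     (\<lambda>w. t * (2 * (\<Sum>c\<in>I. dirderiv w (A c) y) - (\<Sum>c\<in>I. 2 * B c y * dirderiv w (B c) y)) + dirderiv w g y)) (at y)"
  using assms
  by (auto intro!: derivative_eq_intros dd_works simp: power2_eq_square algebra_simps sum.distrib)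

lemma hd3:
  fixes A B C :: "'b \<Rightarrow> 'v::real_normed_vector \<Rightarrow> real"
  assumes "finite I" "\<And>c. c \<in> I \<Longrightarrow> A c differentiable (at y)" "\<And>c. c \<in> I \<Longrightarrow> B c differentiable (at y)"
    "\<And>c. c \<in> I \<Longrightarrow> C c differentiable (at y)"
  shows "((\<lambda>z. - (\<Sum>c\<in>I. A c z) + (\<Sum>c\<in>I. 2 * B c z * C c z)) has_derivative
     (\<lambda>w. - (\<Sum>c\<in>I. dirderiv w (A c) y) + (\<Sum>c\<in>I. 2 * (dirderiv w (B c) y * C c y + B c y * dirderiv w (C c) y)))) (at y)"
  using assms
  by (auto intro!: derivative_eq_intros dd_works simp: algebra_simps sum.distrib)

lemma hd4:
  fixes A B C :: "'b \<Rightarrow> 'v::real_normed_vector \<Rightarrow> real"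
  assumes "finite I" "\<And>c. c \<in> I \<Longrightarrow> A c differentiable (at y)" "\<And>c. c \<in> I \<Longrightarrow> B c differentiable (at y)"
    "\<And>c. c \<in> I \<Longrightarrow> C c differentiable (at y)" "g differentiable (at y)"
  shows "((\<lambda>z. t * (2 * (\<Sum>c\<in>I. A c z) - 2 * (\<Sum>c\<in>I. B c z * C c z)) + g z) has_derivative
     (\<lambda>w. t * (2 * (\<Sum>c\<in>I. dirderiv w (A c) y) - 2 * (\<Sum>c\<in>I. dirderiv w (B c) y * C c y + B c y * dirderiv w (C c) y)) + dirderiv w g y)) (at y)"
  using assms
  by (auto intro!: derivative_eq_intros dd_works simp: algebra_simps sum.distrib)

lemma sq_delta:
  fixes H :: "'b \<Rightarrow> 'b \<Rightarrow> real"
  assumes "finite A"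
  shows "(\<Sum>i\<in>A. \<Sum>j\<in>A. (H i j - (if i = j then k else 0))\<^sup>2)
     = (\<Sum>i\<in>A. \<Sum>j\<in>A. (H i j)\<^sup>2) - 2 * k * (\<Sum>i\<in>A. H i i) + k\<^sup>2 * real (card A)"
proof -
  have e: "(H i j - (if i = j then k else 0))\<^sup>2 = (H i j)\<^sup>2 + (if i = j then k\<^sup>2 - 2 * k * H i i else 0)" for i j
    by (auto simp: power2_eq_square algebra_simps)
  have "(\<Sum>i\<in>A. \<Sum>j\<in>A. (H i j - (if i = j then k else 0))\<^sup>2)
      = (\<Sum>i\<in>A. (\<Sum>j\<in>A. (H i j)\<^sup>2) + (k\<^sup>2 - 2 * k * H i i))"
    using assms by (simp add: e sum.distrib)
  also have "\<dots> = (\<Sum>i\<in>A. \<Sum>j\<in>A. (H i j)\<^sup>2) - 2 * k * (\<Sum>i\<in>A. H i i) + k\<^sup>2 * real (card A)"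
    by (simp add: sum.distrib sum_subtractf sum_distrib_left)
  finally show ?thesis .
qed

lemma grad_inner: "grad g1 y \<bullet> grad g2 y = (\<Sum>b\<in>Basis. dirderiv b g1 y * dirderiv b g2 y)"
proof -
  have "grad g1 y \<bullet> grad g2 y = (\<Sum>b\<in>Basis. (grad g1 y \<bullet> b) * (grad g2 y \<bullet> b))"
    by (rule euclidean_inner)
  also have "\<dots> = (\<Sum>b\<in>Basis. dirderiv b g1 y * dirderiv b g2 y)"
    by (intro sum.cong) (auto simp: grad_def)
  finally show ?thesis .
qed

lemma norm_grad: "(norm (grad g y))\<^sup>2 = (\<Sum>b\<in>Basis. (dirderiv b g y)\<^sup>2)"
  unfolding power2_norm_eq_inner grad_inner by (simp add: power2_eq_square)

lemma spatial:
  fixes g h W :: "'a::euclidean_space \<Rightarrow> real"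
  assumes sg: "smooth_on S g" and sh: "smooth_on S h" and x: "x \<in> S" and tp: "t > 0"
    and hE: "\<forall>y\<in>S. h y = - lap g y + (\<Sum>b\<in>Basis. (dirderiv b g y)\<^sup>2) + real DIM('a) / (2 * t)"
    and wE: "\<forall>y\<in>S. W y = t * (2 * lap g y - (\<Sum>b\<in>Basis. (dirderiv b g y)\<^sup>2)) + g y - real DIM('a)"
  shows "- (2 * lap g x - (\<Sum>b\<in>Basis. (dirderiv b g x)\<^sup>2))
           + t * (2 * lap h x - 2 * (\<Sum>b\<in>Basis. dirderiv b g x * dirderiv b h x)) + h x + lap W x
         = 2 * t * (\<Sum>i\<in>Basis. \<Sum>j\<in>Basis.
                   (hess g x i j - (if i = j then 1 / (2 * t) else 0))\<^sup>2)
           + 2 * (\<Sum>b\<in>Basis. dirderiv b W x * dirderiv b g x)"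
proof -
  have oS: "open S" using sg by (simp add: smooth_on_def)
  note D0 = smooth_diff[OF sg]
  note D1 = smooth_diff[OF smooth_dd[OF sg]]
  note D2 = smooth_diff[OF smooth_dd[OF smooth_dd[OF sg]]]
  note D3 = smooth_diff[OF smooth_dd[OF smooth_dd[OF smooth_dd[OF sg]]]]
  note D4 = smooth_diff[OF smooth_dd[OF smooth_dd[OF smooth_dd[OF smooth_dd[OF sg]]]]]
  let ?A = "\<lambda>c. dirderiv c (dirderiv c g)"
  let ?B = "\<lambda>c. dirderiv c g"
  have lapg: "lap g y = (\<Sum>c\<in>Basis. ?A c y)" for y by (simp add: lap_def hess_def)
  have E1: "dirderiv b h y = - (\<Sum>c\<in>Basis. dirderiv b (?A c) y) + (\<Sum>c\<in>Basis. 2 * ?B c y * dirderiv b (?B c) y)"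
    if y: "y \<in> S" for b y
  proof -
    have "dirderiv b h y = dirderiv b (\<lambda>z. - (\<Sum>c\<in>Basis. ?A c z) + (\<Sum>c\<in>Basis. (?B c z)\<^sup>2) + real DIM('a) / (2 * t)) y"
      by (rule dd_local[OF oS y]) (use hE lapg in auto)
    also have "\<dots> = - (\<Sum>c\<in>Basis. dirderiv b (?A c) y) + (\<Sum>c\<in>Basis. 2 * ?B c y * dirderiv b (?B c) y)"
      by (rule dd_eq, rule hd1) (auto intro: D2 D1 y)
    finally show ?thesis .
  qed
  have E2: "dirderiv b W y = t * (2 * (\<Sum>c\<in>Basis. dirderiv b (?A c) y) - 2 * (\<Sum>c\<in>Basis. ?B c y * dirderiv b (?B c) y)) + dirderiv b g y"
    if y: "y \<in> S" for b y
  proof -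
    have "dirderiv b W y = dirderiv b (\<lambda>z. t * (2 * (\<Sum>c\<in>Basis. ?A c z) - (\<Sum>c\<in>Basis. (?B c z)\<^sup>2)) + g z - real DIM('a)) y"
      by (rule dd_local[OF oS y]) (use wE lapg in auto)
    also have "\<dots> = t * (2 * (\<Sum>c\<in>Basis. dirderiv b (?A c) y) - (\<Sum>c\<in>Basis. 2 * ?B c y * dirderiv b (?B c) y)) + dirderiv b g y"
      by (rule dd_eq, rule hd2) (auto intro: D2 D1 D0 y)
    finally show ?thesis by (simp add: sum_distrib_left mult.assoc)
  qed
  have E3: "dirderiv b (dirderiv b h) x = - (\<Sum>c\<in>Basis. dirderiv b (dirderiv b (?A c)) x)
      + (\<Sum>c\<in>Basis. 2 * (dirderiv b (?B c) x * dirderiv b (?B c) x + ?B c x * dirderiv b (dirderiv b (?B c)) x))" for b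
  proof -
    have "dirderiv b (dirderiv b h) x = dirderiv b (\<lambda>z. - (\<Sum>c\<in>Basis. dirderiv b (?A c) z) + (\<Sum>c\<in>Basis. 2 * ?B c z * dirderiv b (?B c) z)) x"
      by (rule dd_local[OF oS x]) (use E1 in auto)
    also have "\<dots> = - (\<Sum>c\<in>Basis. dirderiv b (dirderiv b (?A c)) x)
      + (\<Sum>c\<in>Basis. 2 * (dirderiv b (?B c) x * dirderiv b (?B c) x + ?B c x * dirderiv b (dirderiv b (?B c)) x))"
      by (rule dd_eq, rule hd3) (auto intro: D3 D2 D1 x)
    finally show ?thesis .
  qed
  have E4: "dirderiv b (dirderiv b W) x = t * (2 * (\<Sum>c\<in>Basis. dirderiv b (dirderiv b (?A c)) x)
      - 2 * (\<Sum>c\<in>Basis. dirderiv b (?B c) x * dirderiv b (?B c) x + ?B c x * dirderiv b (dirderiv b (?B c)) x))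
      + dirderiv b (dirderiv b g) x" for b
  proof -
    have "dirderiv b (dirderiv b W) x = dirderiv b (\<lambda>z. t * (2 * (\<Sum>c\<in>Basis. dirderiv b (?A c) z) - 2 * (\<Sum>c\<in>Basis. ?B c z * dirderiv b (?B c) z)) + dirderiv b g z) x"
      by (rule dd_local[OF oS x]) (use E2 in auto)
    also have "\<dots> = t * (2 * (\<Sum>c\<in>Basis. dirderiv b (dirderiv b (?A c)) x)
      - 2 * (\<Sum>c\<in>Basis. dirderiv b (?B c) x * dirderiv b (?B c) x + ?B c x * dirderiv b (dirderiv b (?B c)) x))
      + dirderiv b (dirderiv b g) x"
      by (rule dd_eq, rule hd4) (auto intro: D3 D2 D1 x)
    finally show ?thesis .
  qed
  define L where "L = (\<Sum>b\<in>Basis. dirderiv b (dirderiv b g) x)"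
  define Q where "Q = (\<Sum>b\<in>Basis. (dirderiv b g x)\<^sup>2)"
  define P where "P = (\<Sum>b\<in>Basis. \<Sum>c\<in>Basis. (dirderiv b (dirderiv c g) x)\<^sup>2)"
  define X where "X = (\<Sum>b\<in>Basis. \<Sum>c\<in>Basis. dirderiv b (dirderiv b (?A c)) x)"
  define R where "R = (\<Sum>b\<in>Basis. \<Sum>c\<in>Basis. dirderiv b g x * dirderiv b (?A c) x)"
  define R' where "R' = (\<Sum>b\<in>Basis. \<Sum>c\<in>Basis. ?B c x * dirderiv b (dirderiv b (?B c)) x)"
  define Z where "Z = (\<Sum>b\<in>Basis. \<Sum>c\<in>Basis. dirderiv b g x * (?B c x * dirderiv b (?B c) x))"
  have lapH: "lap h x = - X + 2 * P + 2 * R'"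
    unfolding lap_def hess_def E3 X_def P_def R'_def
    by (simp add: sum.distrib sum_negf sum_subtractf sum_distrib_left power2_eq_square algebra_simps)
  have gh: "(\<Sum>b\<in>Basis. dirderiv b g x * dirderiv b h x) = - R + 2 * Z"
    unfolding E1[OF x] R_def Z_def
    by (simp add: sum.distrib sum_negf sum_subtractf sum_distrib_left algebra_simps)
  have lapW: "lap W x = t * (2 * X - 2 * P - 2 * R') + L"
    unfolding lap_def hess_def E4 X_def P_def R'_def L_def
    by (simp add: sum.distrib sum_subtractf sum_distrib_left power2_eq_square algebra_simps)
  have Wg: "(\<Sum>b\<in>Basis. dirderiv b W x * dirderiv b g x) = t * (2 * R - 2 * Z) + Q"
    unfolding E2[OF x] R_def Z_def Q_def
    by (simp add: sum.distrib sum_subtractf sum_distrib_left power2_eq_square algebra_simps)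
  have RR: "R' = R"
  proof -
    have "R' = (\<Sum>c\<in>Basis. \<Sum>b\<in>Basis. ?B c x * dirderiv b (dirderiv b (?B c)) x)"
      unfolding R'_def by (rule sum.swap)
    also have "\<dots> = R" unfolding R_def
      by (intro sum.cong refl) (simp add: sym3[OF sg x])
    finally show ?thesis .
  qed
  have hx: "h x = - L + Q + real DIM('a) / (2 * t)"
    using hE x lapg unfolding L_def Q_def by simp
  have hs: "(\<Sum>i\<in>Basis. \<Sum>j\<in>Basis. (hess g x i j - (if i = j then 1 / (2 * t) else 0))\<^sup>2)
      = P - 2 * (1 / (2 * t)) * L + (1 / (2 * t))\<^sup>2 * real DIM('a)"
    unfolding sq_delta[OF finite_Basis] P_def L_def hess_def by simp
  have lg: "lap g x = L" unfolding L_def lapg ..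
  show ?thesis
    unfolding lapH gh lapW Wg hx hs lg Q_def[symmetric] RR
    using tp by (simp add: field_simps power2_eq_square)
qed



lemma hd5:
  fixes A B :: "'b \<Rightarrow> 'v::real_normed_vector \<Rightarrow> real"
  assumes "finite I" "(Tf has_derivative T') (at y)"
    "\<And>c. c \<in> I \<Longrightarrow> A c differentiable (at y)" "\<And>c. c \<in> I \<Longrightarrow> B c differentiable (at y)"
    "G differentiable (at y)"
  shows "((\<lambda>z. Tf z * (2 * (\<Sum>c\<in>I. A c z) - (\<Sum>c\<in>I. (B c z)\<^sup>2)) + G z - K) has_derivative
     (\<lambda>w. T' w * (2 * (\<Sum>c\<in>I. A c y) - (\<Sum>c\<in>I. (B c y)\<^sup>2))
        + Tf y * (2 * (\<Sum>c\<in>I. dirderiv w (A c) y) - (\<Sum>c\<in>I. 2 * B c y * dirderiv w (B c) y))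
        + dirderiv w G y)) (at y)"
  using assms
  by (auto intro!: derivative_eq_intros dd_works simp: power2_eq_square algebra_simps sum.distrib)

theorem proposition3p1:
  fixes \<Omega>0 :: "'a::euclidean_space set"
    and \<Omega> :: "real \<Rightarrow> 'a set"
    and \<phi> :: "'a \<Rightarrow> real \<Rightarrow> 'a"
    and f :: "'a \<Rightarrow> real \<Rightarrow> real"
    and \<tau> :: "real \<Rightarrow> real"
    and T :: real
  assumes open0: "open \<Omega>0"
    and openOm: "\<forall>t\<in>{0<..<T}. open (\<Omega> t)"
    and diffeo: "smooth_diffeo_family \<phi> \<Omega>0 \<Omega> T"
    and f_smooth: "\<exists>U. {(x, t). t \<in> {0<..<T} \<and> x \<in> \<Omega> t} \<subseteq> U \<and> smooth_on U (\<lambda>(x, t). f x t)"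
    and flow: "\<forall>t\<in>{0<..<T}. \<forall>q. \<phi> q t \<in> \<Omega> t \<longrightarrow>
                 ((\<lambda>s. \<phi> q s) has_vector_derivative - grad (\<lambda>y. f y t) (\<phi> q t)) (at t)"
    and f_eq: "\<forall>t\<in>{0<..<T}. \<forall>x\<in>\<Omega> t.
                 deriv (\<lambda>s. f x s) t + lap (\<lambda>y. f y t) x
                   = (norm (grad (\<lambda>y. f y t) x))\<^sup>2 + real DIM('a) / (2 * \<tau> t)"
    and tau_pos: "\<forall>t\<in>{0<..<T}. \<tau> t > 0"
    and tau_deriv: "\<forall>t\<in>{0<..<T}. (\<tau> has_real_derivative -1) (at t)"
  shows "\<forall>t\<in>{0<..<T}. \<forall>q. \<phi> q t \<in> \<Omega> t \<longrightarrow>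
           deriv (\<lambda>s. Wfun \<tau> f (\<phi> q s) s) t + lap (\<lambda>y. Wfun \<tau> f y t) (\<phi> q t)
             = 2 * \<tau> t * (\<Sum>i\<in>Basis. \<Sum>j\<in>Basis.
                   (hess (\<lambda>y. f y t) (\<phi> q t) i j - (if i = j then 1 / (2 * \<tau> t) else 0))\<^sup>2)
               + grad (\<lambda>y. Wfun \<tau> f y t) (\<phi> q t) \<bullet> grad (\<lambda>y. f y t) (\<phi> q t)"
proof (intro ballI allI impI)
  fix t q assume t: "t \<in> {0<..<T}" and xin: "\<phi> q t \<in> \<Omega> t"
  define x where "x = \<phi> q t"
  obtain U where Usub: "{(x, t). t \<in> {0<..<T} \<and> x \<in> \<Omega> t} \<subseteq> U"
    and smF0: "smooth_on U (\<lambda>(x, t). f x t)" using f_smooth by blast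
  define F where "F = (\<lambda>(x, t). f x t)"
  have smF: "smooth_on U F" using smF0 by (simp add: F_def)
  have Fapp: "F (y, s) = f y s" for y s by (simp add: F_def)
  have slF: "(\<lambda>y. F (y, s)) = (\<lambda>y. f y s)" for s by (simp add: F_def)
  have oU: "open U" using smF by (simp add: smooth_on_def)
  define S where "S = \<Omega> t"
  have oS: "open S" using openOm t by (simp add: S_def)
  have xS: "x \<in> S" using xin by (simp add: S_def x_def)
  have SU: "S \<subseteq> {y. (y, t) \<in> U}" using Usub t by (auto simp: S_def)
  have p0U: "(x, t) \<in> U" using SU xS by auto
  define g where "g = (\<lambda>y. f y t)"
  define h where "h = (\<lambda>y. dirderiv (0, 1) F (y, t))"
  define W where "W = (\<lambda>y. Wfun \<tau> f y t)"
  have sg: "smooth_on S g"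
    using smooth_subset[OF slice_smooth[OF smF, of t] oS SU] by (simp add: slF g_def)
  have sh: "smooth_on S h"
    using smooth_subset[OF slice_smooth[OF smooth_dd[OF smF], of t] oS SU] by (simp add: h_def)
  have tp: "\<tau> t > 0" using tau_pos t by auto
  have dt: "deriv (\<lambda>s. f y s) t = h y" if y: "(y, t) \<in> U" for y
  proof -
    have "((\<lambda>s. F ((y, 0) + s *\<^sub>R (0, 1))) has_real_derivative dirderiv (0, 1) F ((y, 0) + t *\<^sub>R (0, 1))) (at t)"
      by (rule dd_line) (use smooth_diff[OF smF] y in simp)
    then have "((\<lambda>s. f y s) has_real_derivative h y) (at t)"
      by (simp add: Fapp h_def)
    then show ?thesis by (rule DERIV_imp_deriv)
  qed
  have hE: "\<forall>y\<in>S. h y = - lap g y + (\<Sum>b\<in>Basis. (dirderiv b g y)\<^sup>2) + real DIM('a) / (2 * \<tau> t)"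
  proof
    fix y assume y: "y \<in> S"
    have "deriv (\<lambda>s. f y s) t + lap g y = (norm (grad g y))\<^sup>2 + real DIM('a) / (2 * \<tau> t)"
      using f_eq t y by (auto simp: S_def g_def)
    then show "h y = - lap g y + (\<Sum>b\<in>Basis. (dirderiv b g y)\<^sup>2) + real DIM('a) / (2 * \<tau> t)"
      using dt[of y] y SU by (auto simp: norm_grad)
  qed
  have wE: "\<forall>y\<in>S. W y = \<tau> t * (2 * lap g y - (\<Sum>b\<in>Basis. (dirderiv b g y)\<^sup>2)) + g y - real DIM('a)"
    by (simp add: W_def Wfun_def g_def norm_grad)
  have SP: "- (2 * lap g x - (\<Sum>b\<in>Basis. (dirderiv b g x)\<^sup>2))
           + \<tau> t * (2 * lap h x - 2 * (\<Sum>b\<in>Basis. dirderiv b g x * dirderiv b h x)) + h x + lap W x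
         = 2 * \<tau> t * (\<Sum>i\<in>Basis. \<Sum>j\<in>Basis.
                   (hess g x i j - (if i = j then 1 / (2 * \<tau> t) else 0))\<^sup>2)
           + 2 * (\<Sum>b\<in>Basis. dirderiv b W x * dirderiv b g x)"
    by (rule spatial[OF sg sh xS tp hE wE])
  have TD: "deriv (\<lambda>s. Wfun \<tau> f (\<phi> q s) s) t
      = - (2 * lap g x - (\<Sum>b\<in>Basis. (dirderiv b g x)\<^sup>2))
           + \<tau> t * (2 * lap h x - 2 * (\<Sum>b\<in>Basis. dirderiv b g x * dirderiv b h x)) + h x
        - (\<Sum>b\<in>Basis. dirderiv b g x * dirderiv b W x)"
  proof -
    define K where "K b = dirderiv (b, 0) (dirderiv (b, 0) F)" for b :: 'a
    define Fb where "Fb b = dirderiv (b, 0) F" for b :: 'a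
    define Gt where "Gt p = \<tau> (snd p) * (2 * (\<Sum>b\<in>Basis. K b p) - (\<Sum>b\<in>Basis. (Fb b p)\<^sup>2)) + F p - real DIM('a)" for p
    define v where "v = - grad g x"
    have eqW: "Wfun \<tau> f y s = Gt (y, s)" if ys: "(y, s) \<in> U" for y s
    proof -
      have a: "dirderiv b (dirderiv b (\<lambda>y. f y s)) y = K b (y, s)" for b
        using slice_iter[OF smF ys, of "[b, b]"] by (simp add: slF K_def)
      have b: "dirderiv b (\<lambda>y. f y s) y = Fb b (y, s)" for b
        using slice_iter[OF smF ys, of "[b]"] by (simp add: slF Fb_def)
      show ?thesis
        by (simp add: Wfun_def Gt_def lap_def hess_def norm_grad a b Fapp)
    qed
    have tauD0: "(\<tau> has_derivative (*) (-1)) (at (snd (x, t)))"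
      using tau_deriv t by (simp add: has_field_derivative_def)
    have tauD: "((\<lambda>p. \<tau> (snd p)) has_derivative (\<lambda>w. - snd w)) (at (x, t))"
    proof -
      have sD: "((\<lambda>p. snd p) has_derivative (\<lambda>p. snd p)) (at (x, t))"
        by (auto intro!: derivative_eq_intros)
      show ?thesis using has_derivative_compose[OF sD tauD0] by simp
    qed
    define G' where "G' w = (- snd w) * (2 * (\<Sum>b\<in>Basis. K b (x, t)) - (\<Sum>b\<in>Basis. (Fb b (x, t))\<^sup>2))
        + \<tau> (snd (x, t)) * (2 * (\<Sum>b\<in>Basis. dirderiv w (K b) (x, t)) - (\<Sum>b\<in>Basis. 2 * Fb b (x, t) * dirderiv w (Fb b) (x, t)))
        + dirderiv w F (x, t)" for w
    have GD: "(Gt has_derivative G') (at (x, t))"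
      unfolding Gt_def[abs_def] G'_def[abs_def]
      by (rule hd5[OF finite_Basis tauD])
        (auto simp: K_def Fb_def intro: smooth_diff[OF smooth_dd[OF smooth_dd[OF smF]] p0U]
           smooth_diff[OF smooth_dd[OF smF] p0U] smooth_diff[OF smF p0U])
    have Gdiff: "Gt differentiable (at (x, t))" using GD by (auto simp: differentiable_def)
    have linG: "linear G'" using GD by (rule has_derivative_linear)
    have cD0: "((\<lambda>s. (\<phi> q s, s)) has_derivative (\<lambda>r. (r *\<^sub>R v, r))) (at t)"
      using flow t xin
      by (auto intro!: has_derivative_Pair derivative_eq_intros
          simp: has_vector_derivative_def v_def g_def x_def)
    have cD: "((\<lambda>s. (\<phi> q s, s)) has_derivative (\<lambda>r. r *\<^sub>R (v, 1))) (at t)"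
      using cD0 by simp
    have GD': "(Gt has_derivative G') (at (\<phi> q t, t))" using GD by (simp add: x_def)
    have comp: "((\<lambda>s. Gt (\<phi> q s, s)) has_derivative (\<lambda>r. G' (r *\<^sub>R (v, 1)))) (at t)"
      using has_derivative_compose[OF cD GD'] by simp
    obtain e where e: "e > 0" "ball (x, t) e \<subseteq> U" using oU p0U open_contains_ball by blast
    have ccont: "continuous (at t) (\<lambda>s. (\<phi> q s, s))"
      using cD has_derivative_continuous by blast
    obtain d where d: "d > 0" "\<And>s. dist s t < d \<Longrightarrow> dist (\<phi> q s, s) (\<phi> q t, t) < e"
      using ccont e(1) unfolding continuous_at_eps_delta by blast
    have comp2: "((\<lambda>s. Wfun \<tau> f (\<phi> q s) s) has_derivative (\<lambda>r. G' (r *\<^sub>R (v, 1)))) (at t)"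
    proof (rule has_derivative_transform_within[OF comp d(1)])
      fix s assume "dist s t < d"
      then have "(\<phi> q s, s) \<in> U" using d(2)[of s] e(2) by (auto simp: x_def dist_commute)
      then show "Gt (\<phi> q s, s) = Wfun \<tau> f (\<phi> q s) s" using eqW by simp
    qed simp
    have "(\<lambda>r. G' (r *\<^sub>R (v, 1))) = (*) (G' (v, 1))"
    proof
      fix r show "G' (r *\<^sub>R (v, 1)) = G' (v, 1) * r"
        by (subst linear_cmul[OF linG]) (simp add: mult.commute)
    qed
    then have "((\<lambda>s. Wfun \<tau> f (\<phi> q s) s) has_real_derivative G' (v, 1)) (at t)"
      using comp2 by (simp add: has_field_derivative_def)
    then have dv: "deriv (\<lambda>s. Wfun \<tau> f (\<phi> q s) s) t = G' (v, 1)" by (rule DERIV_imp_deriv)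
    have vdec: "(v, 1::real) = (0, 1) + (\<Sum>b\<in>Basis. (- dirderiv b g x) *\<^sub>R (b, 0))"
      by (simp add: prod_eq_iff fst_sum snd_sum v_def grad_def sum_negf)
    have G'dec: "G' (v, 1) = G' (0, 1) + (\<Sum>b\<in>Basis. (- dirderiv b g x) * G' (b, 0))"
      unfolding vdec linear_add[OF linG] linear_sum[OF linG] linear_cmul[OF linG] by simp
    have oSl: "open {y. (y, t) \<in> U}" using open_slice[OF oU] .
    have Gb: "G' (b, 0) = dirderiv b W x" for b
    proof -
      have "G' (b, 0) = dirderiv (b, 0) Gt (x, t)" using dd_eq[OF GD] by simp
      also have "\<dots> = dirderiv b (\<lambda>y. Gt (y, t)) x" using slice1[OF Gdiff] by simp
      also have "\<dots> = dirderiv b W x"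
        by (rule dd_local[OF oSl]) (use p0U eqW in \<open>auto simp: W_def\<close>)
      finally show ?thesis .
    qed
    have cK: "K b (x, t) = dirderiv b (dirderiv b g) x" for b
      using slice_iter[OF smF p0U, of "[b, b]"] by (simp add: slF K_def g_def)
    have cF: "Fb b (x, t) = dirderiv b g x" for b
      using slice_iter[OF smF p0U, of "[b]"] by (simp add: slF Fb_def g_def)
    have cK0: "dirderiv (0, 1) (K b) (x, t) = dirderiv b (dirderiv b h) x" for b
    proof -
      have "dirderiv (0, 1) (K b) (x, t) = dirderiv (b, 0) (dirderiv (b, 0) (dirderiv (0, 1) F)) (x, t)"
        unfolding K_def by (rule sym3[OF smF p0U, symmetric])
      also have "\<dots> = dirderiv b (dirderiv b h) x"
        using slice_iter[OF smooth_dd[OF smF] p0U, of "[b, b]"] by (simp add: h_def)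
      finally show ?thesis .
    qed
    have cF0: "dirderiv (0, 1) (Fb b) (x, t) = dirderiv b h x" for b
    proof -
      have "dirderiv (0, 1) (Fb b) (x, t) = dirderiv (b, 0) (dirderiv (0, 1) F) (x, t)"
        unfolding Fb_def by (rule sym2[OF smF p0U])
      also have "\<dots> = dirderiv b h x"
        using slice_iter[OF smooth_dd[OF smF] p0U, of "[b]"] by (simp add: h_def)
      finally show ?thesis .
    qed
    have cH: "dirderiv (0, 1) F (x, t) = h x" by (simp add: h_def)
    have G01: "G' (0, 1) = - (2 * lap g x - (\<Sum>b\<in>Basis. (dirderiv b g x)\<^sup>2))
           + \<tau> t * (2 * lap h x - 2 * (\<Sum>b\<in>Basis. dirderiv b g x * dirderiv b h x)) + h x"
      by (simp add: G'_def cK cF cK0 cF0 cH lap_def hess_def sum_distrib_left mult.assoc)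
    show ?thesis
      unfolding dv G'dec G01 Gb
      by (simp add: sum_negf algebra_simps)
  qed
  have GI: "grad (\<lambda>y. Wfun \<tau> f y t) (\<phi> q t) \<bullet> grad (\<lambda>y. f y t) (\<phi> q t)
      = (\<Sum>b\<in>Basis. dirderiv b W x * dirderiv b g x)"
    by (simp add: grad_inner W_def g_def x_def)
  show "deriv (\<lambda>s. Wfun \<tau> f (\<phi> q s) s) t + lap (\<lambda>y. Wfun \<tau> f y t) (\<phi> q t)
             = 2 * \<tau> t * (\<Sum>i\<in>Basis. \<Sum>j\<in>Basis.
                   (hess (\<lambda>y. f y t) (\<phi> q t) i j - (if i = j then 1 / (2 * \<tau> t) else 0))\<^sup>2)
               + grad (\<lambda>y. Wfun \<tau> f y t) (\<phi> q t) \<bullet> grad (\<lambda>y. f y t) (\<phi> q t)"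
    unfolding GI TD using SP unfolding W_def g_def x_def
    by (simp add: mult.commute)
qed

end
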